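(* Assume the demand is i.i.d. with pmf $P_X$. Let $\theta\in\mathcal P_S$ and $\xi(w)=\sum_{(x,s):s-x=w}P_X(x)\theta(s)$. Then the structured policy $\mathbf b=(b,b,\dots)$ with respect to $(\theta,\xi)$ is an invariant policy for the initial battery distribution $\theta$.
   Context: $\mathcal X=\{0,\dots,m_x\}$, $\mathcal Y=\{0,\dots,m_y\}$, $\mathcal S=\{0,\dots,m_s\}$ with $m_x\le m_y$; $\mathcal W=\{s-x\}$; $\mathcal P_S$ the pmfs on $\mathcal S$; $\mathcal Y_\circ(w)=\{y\in\mathcal Y:w+y\in\mathcal S\}$. Demand $X_t$ i.i.d. $\sim P_X$ independent of $S_1$. A constant-distribution policy $b$ (conditional pmf with $b(\mathcal Y_\circ(w)\mid w)=1$) draws $Y_t\sim b(\cdot\mid W_t)$, $W_t=S_t-X_t$, $S_{t+1}=S_t+Y_t-X_t$. The structured policy with respect to $(\theta,\xi)$ is $b(y\mid w)=P_X(y)\theta(y+w)/\xi(w)$ for $y\in\mathcal X\cap\mathcal Y_\circ(w)$ and $0$ otherwise (when $\xi(w)=0$, $b(\cdot\mid w)$ is an arbitrary pmf on $\mathcal Y_\circ(w)$; such $w$ occur with probability zero). With $\theta_t(s)=P(S_t=s\mid Y^{t-1}=y^{t-1})$ and $\xi_t(w)=P(W_t=w\mid Y^{t-1}=y^{t-1})$, $b$ is invariant for initial distribution $\theta_1$ (i.e. when $S_1\sim\theta_1$) if $\theta_t=\theta_1$ and $\xi_t=\xi_1$ for all $t$, where $\xi_1(w)=\sum_{(x,s):s-x=w}P_X(x)\theta_1(s)$.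 *)

theory Defs
  imports "HOL-Probability.Probability"
begin

text \<open>Values of demand X, energy Y, battery state S are integers; W = S - X may be negative.
  The alphabets are X = {0..mx}, Y = {0..my}, S = {0..ms}.\<close>

definition Yo :: "nat \<Rightarrow> nat \<Rightarrow> int \<Rightarrow> int set" where
  "Yo my ms w = {y. 0 \<le> y \<and> y \<le> int my \<and> 0 \<le> w + y \<and> w + y \<le> int ms}"

definition Wset :: "nat \<Rightarrow> nat \<Rightarrow> int set" where
  "Wset mx ms = {s - x | s x. 0 \<le> s \<and> s \<le> int ms \<and> 0 \<le> x \<and> x \<le> int mx}"

definition xi :: "int pmf \<Rightarrow> int pmf \<Rightarrow> int \<Rightarrow> real" where
  "xi PX \<theta> w = pmf (map_pmf (\<lambda>(x, s). s - x) (pair_pmf PX \<theta>)) w"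

definition structured_policy ::
  "nat \<Rightarrow> nat \<Rightarrow> nat \<Rightarrow> int pmf \<Rightarrow> int pmf \<Rightarrow> (int \<Rightarrow> int pmf) \<Rightarrow> bool" where
  "structured_policy mx my ms PX \<theta> b \<longleftrightarrow>
     (\<forall>w \<in> Wset mx ms.
        set_pmf (b w) \<subseteq> Yo my ms w \<and>
        (xi PX \<theta> w \<noteq> 0 \<longrightarrow>
           (\<forall>y. pmf (b w) y =
                 (if y \<in> {0..int mx} \<inter> Yo my ms w
                  then pmf PX y * pmf \<theta> (y + w) / xi PX \<theta> w else 0))))"

text \<open>Trajectory of the system started in battery state s: list of (S_t, X_t, Y_t), t = 1..n.
  X_t ~ P_X fresh (i.i.d.), Y_t ~ b(. | W_t) with W_t = S_t - X_t, S_{t+1} = S_t + Y_t - X_t.\<close>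
fun run :: "int pmf \<Rightarrow> (int \<Rightarrow> int pmf) \<Rightarrow> nat \<Rightarrow> int \<Rightarrow> (int \<times> int \<times> int) list pmf" where
  "run PX b 0 s = return_pmf []"
| "run PX b (Suc n) s =
     bind_pmf PX (\<lambda>x. bind_pmf (b (s - x)) (\<lambda>y.
       map_pmf (\<lambda>rest. (s, x, y) # rest) (run PX b n (s + y - x))))"

definition traj :: "int pmf \<Rightarrow> (int \<Rightarrow> int pmf) \<Rightarrow> int pmf \<Rightarrow> nat \<Rightarrow> (int \<times> int \<times> int) list pmf" where
  "traj PX b \<theta>1 n = bind_pmf \<theta>1 (run PX b n)"

text \<open>Y^{t-1} of a trajectory of length t (t \<ge> 1); S_t and W_t are read off entry t-1.\<close>
definition Ypast :: "nat \<Rightarrow> (int \<times> int \<times> int) list \<Rightarrow> int list" where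
  "Ypast t tr = map (\<lambda>(s, x, y). y) (take (t - 1) tr)"

definition S_at :: "nat \<Rightarrow> (int \<times> int \<times> int) list \<Rightarrow> int" where
  "S_at t tr = fst (tr ! (t - 1))"

definition W_at :: "nat \<Rightarrow> (int \<times> int \<times> int) list \<Rightarrow> int" where
  "W_at t tr = fst (tr ! (t - 1)) - fst (snd (tr ! (t - 1)))"

definition theta_t :: "int pmf \<Rightarrow> (int \<Rightarrow> int pmf) \<Rightarrow> int pmf \<Rightarrow> nat \<Rightarrow> int list \<Rightarrow> int \<Rightarrow> real" where
  "theta_t PX b \<theta>1 t ys s =
     measure_pmf.prob (traj PX b \<theta>1 t) {tr. S_at t tr = s \<and> Ypast t tr = ys}
     / measure_pmf.prob (traj PX b \<theta>1 t) {tr. Ypast t tr = ys}"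

definition xi_t :: "int pmf \<Rightarrow> (int \<Rightarrow> int pmf) \<Rightarrow> int pmf \<Rightarrow> nat \<Rightarrow> int list \<Rightarrow> int \<Rightarrow> real" where
  "xi_t PX b \<theta>1 t ys w =
     measure_pmf.prob (traj PX b \<theta>1 t) {tr. W_at t tr = w \<and> Ypast t tr = ys}
     / measure_pmf.prob (traj PX b \<theta>1 t) {tr. Ypast t tr = ys}"

definition invariant_policy :: "int pmf \<Rightarrow> (int \<Rightarrow> int pmf) \<Rightarrow> int pmf \<Rightarrow> bool" where
  "invariant_policy PX b \<theta>1 \<longleftrightarrow>
     (\<forall>t \<ge> 1. \<forall>ys. length ys = t - 1 \<longrightarrow>
        measure_pmf.prob (traj PX b \<theta>1 t) {tr. Ypast t tr = ys} > 0 \<longrightarrow>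
        (\<forall>s. theta_t PX b \<theta>1 t ys s = pmf \<theta>1 s) \<and>
        (\<forall>w. xi_t PX b \<theta>1 t ys w = xi PX \<theta>1 w))"

end

theory Submission
  imports Defs
begin

definition J :: "int pmf \<Rightarrow> (int \<Rightarrow> int pmf) \<Rightarrow> int pmf \<Rightarrow> (int \<times> int \<times> int) pmf" where
  "J PX b \<theta> = bind_pmf \<theta> (\<lambda>s. bind_pmf PX (\<lambda>x. map_pmf (\<lambda>y. (s,x,y)) (b (s - x))))"

definition Xi :: "int pmf \<Rightarrow> int pmf \<Rightarrow> int pmf" where
  "Xi PX \<theta> = map_pmf (\<lambda>(x, s). s - x) (pair_pmf PX \<theta>)"

lemma pmf_Xi: "pmf (Xi PX \<theta>) w = xi PX \<theta> w" by (simp add: Xi_def xi_def)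

lemma J_map_eq_bind:
  "map_pmf (\<lambda>(s,x,y). (y, s+y-x)) (J PX b \<theta>) = bind_pmf (Xi PX \<theta>) (\<lambda>w. map_pmf (\<lambda>y. (y, w+y)) (b w))"
proof -
  have "map_pmf (\<lambda>(s,x,y). (y, s+y-x)) (J PX b \<theta>) =
     bind_pmf \<theta> (\<lambda>s. bind_pmf PX (\<lambda>x. map_pmf (\<lambda>y. (y, (s-x)+y)) (b (s - x))))"
    unfolding J_def by (simp add: map_bind_pmf map_pmf_comp algebra_simps)
  also have "\<dots> = bind_pmf PX (\<lambda>x. bind_pmf \<theta> (\<lambda>s. map_pmf (\<lambda>y. (y, (s-x)+y)) (b (s - x))))"
    by (rule bind_commute_pmf)
  also have "\<dots> = bind_pmf (Xi PX \<theta>) (\<lambda>w. map_pmf (\<lambda>y. (y, w+y)) (b w))"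
    unfolding Xi_def pair_pmf_def by (simp add: bind_map_pmf bind_assoc_pmf bind_return_pmf map_bind_pmf)
  finally show ?thesis .
qed

lemma int_single:
  fixes M :: "'a pmf"
  shows "measure_pmf.expectation M (\<lambda>w. if w = a then f w else 0) = pmf M a * (f a :: real)"
proof -
  have "(\<lambda>w. if w = a then f w else 0) = (\<lambda>w. f a * indicator {a} w)"
    by (auto simp: indicator_def)
  then show ?thesis by (simp add: measure_pmf_single)
qed

lemma pmf_bind_Xi:
  "pmf (bind_pmf (Xi PX \<theta>) (\<lambda>w. map_pmf (\<lambda>y. (y, w+y)) (b w))) (y0, s') =
    xi PX \<theta> (s' - y0) * pmf (b (s' - y0)) y0"
proof -
  have inj: "inj (\<lambda>y. (y, w+y))" for w :: int by (auto simp: inj_def)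
  have "\<And>w. pmf (map_pmf (\<lambda>y. (y, w+y)) (b w)) (y0, s') = (if w = s' - y0 then pmf (b w) y0 else 0)"
  proof -
    fix w
    show "pmf (map_pmf (\<lambda>y. (y, w+y)) (b w)) (y0, s') = (if w = s' - y0 then pmf (b w) y0 else 0)"
    proof (cases "w = s' - y0")
      case True
      then have "(y0, s') = (\<lambda>y. (y, w+y)) y0" by simp
      then show ?thesis using True by (simp only: pmf_map_inj' [OF inj]) simp
    next
      case False
      then have "(y0, s') \<notin> set_pmf (map_pmf (\<lambda>y. (y, w+y)) (b w))" by auto
      then show ?thesis using False by (metis set_pmf_iff)
    qed
  qed
  then show ?thesis by (simp add: pmf_bind int_single pmf_Xi)
qed
lemma xi_ge:
  "pmf PX y * pmf \<theta> (w + y) \<le> xi PX \<theta> w"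
proof -
  have "pmf PX y * pmf \<theta> (w + y) = measure_pmf.prob (pair_pmf PX \<theta>) {(y, w+y)}"
    by (simp add: measure_pmf_single pmf_pair)
  also have "\<dots> \<le> measure_pmf.prob (pair_pmf PX \<theta>) ((\<lambda>(x, s). s - x) -` {w})"
    by (rule measure_pmf.finite_measure_mono) auto
  also have "\<dots> = xi PX \<theta> w"
    by (simp add: xi_def pmf_map)
  finally show ?thesis .
qed

lemma J_map:
  assumes "mx \<le> my"
    and PXs: "set_pmf PX \<subseteq> {0..int mx}"
    and ths: "set_pmf \<theta> \<subseteq> {0..int ms}"
    and sp: "structured_policy mx my ms PX \<theta> b"
  shows "map_pmf (\<lambda>(s,x,y). (y, s+y-x)) (J PX b \<theta>) = pair_pmf PX \<theta>"
proof (rule pmf_eqI)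
  fix z :: "int \<times> int"
  obtain y0 s' where z: "z = (y0, s')" by fastforce
  define w where "w = s' - y0"
  have sw: "s' = w + y0" by (simp add: w_def)
  have lhs: "pmf (map_pmf (\<lambda>(s,x,y). (y, s+y-x)) (J PX b \<theta>)) z = xi PX \<theta> w * pmf (b w) y0"
    unfolding J_map_eq_bind z pmf_bind_Xi w_def ..
  have rhs: "pmf (pair_pmf PX \<theta>) z = pmf PX y0 * pmf \<theta> (w + y0)"
    by (simp add: z pmf_pair sw)
  show "pmf (map_pmf (\<lambda>(s,x,y). (y, s+y-x)) (J PX b \<theta>)) z = pmf (pair_pmf PX \<theta>) z"
    unfolding lhs rhs
  proof (cases "w \<in> Wset mx ms")
    case False
    have "pmf PX y0 * pmf \<theta> (w + y0) = 0"
    proof (rule ccontr)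
      assume "pmf PX y0 * pmf \<theta> (w + y0) \<noteq> 0"
      then have "y0 \<in> set_pmf PX" "w + y0 \<in> set_pmf \<theta>" by (auto simp: set_pmf_iff)
      with PXs ths have "0 \<le> y0" "y0 \<le> int mx" "0 \<le> w + y0" "w + y0 \<le> int ms" by auto
      then have "w \<in> Wset mx ms" unfolding Wset_def
        by (intro CollectI exI[of _ "w + y0"] exI[of _ y0]) auto
      with False show False by simp
    qed
    moreover have "xi PX \<theta> w = 0"
    proof (rule ccontr)
      assume "xi PX \<theta> w \<noteq> 0"
      then have "w \<in> set_pmf (Xi PX \<theta>)" by (simp add: set_pmf_iff pmf_Xi)
      then obtain x s where "x \<in> set_pmf PX" "s \<in> set_pmf \<theta>" "w = s - x"
        by (auto simp: Xi_def)
      with PXs ths have "0 \<le> s" "s \<le> int ms" "0 \<le> x" "x \<le> int mx" by auto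
      with \<open>w = s - x\<close> have "w \<in> Wset mx ms" unfolding Wset_def by blast
      with False show False by simp
    qed
    ultimately show "xi PX \<theta> w * pmf (b w) y0 = pmf PX y0 * pmf \<theta> (w + y0)" by simp
  next
    case True
    note spw = sp[unfolded structured_policy_def, rule_format, OF True]
    show "xi PX \<theta> w * pmf (b w) y0 = pmf PX y0 * pmf \<theta> (w + y0)"
    proof (cases "xi PX \<theta> w = 0")
      case True
      have "pmf PX y0 * pmf \<theta> (w + y0) \<le> 0" using xi_ge[of PX y0 \<theta> w] True by simp
      moreover have "pmf PX y0 * pmf \<theta> (w + y0) \<ge> 0" by simp
      ultimately show ?thesis using True by simp
    next
      case False
      have bw: "pmf (b w) y0 = (if y0 \<in> {0..int mx} \<inter> Yo my ms w
                  then pmf PX y0 * pmf \<theta> (y0 + w) / xi PX \<theta> w else 0)"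
        using spw False by blast
      show ?thesis
      proof (cases "y0 \<in> {0..int mx} \<inter> Yo my ms w")
        case True
        then show ?thesis using bw False by (simp add: add.commute)
      next
        case nin: False
        have "pmf PX y0 * pmf \<theta> (w + y0) = 0"
        proof (rule ccontr)
          assume "pmf PX y0 * pmf \<theta> (w + y0) \<noteq> 0"
          then have "y0 \<in> set_pmf PX" "w + y0 \<in> set_pmf \<theta>" by (auto simp: set_pmf_iff)
          with PXs ths have "0 \<le> y0" "y0 \<le> int mx" "0 \<le> w + y0" "w + y0 \<le> int ms" by auto
          with assms(1) have "y0 \<in> {0..int mx} \<inter> Yo my ms w" by (auto simp: Yo_def)
          with nin show False by simp
        qed
        then show ?thesis using bw nin by (simp only: if_False mult_zero_right)
      qed
    qed
  qed
qed

definition G :: "nat \<Rightarrow> (int \<times> int \<times> int) list \<Rightarrow> int list \<times> (int \<times> int \<times> int)" where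
  "G t tr = (Ypast t tr, tr ! (t - 1))"

lemma G_Suc: "t \<ge> 1 \<Longrightarrow> G (Suc t) ((s,x,y) # rest) = (y # fst (G t rest), snd (G t rest))"
  by (cases t) (auto simp: G_def Ypast_def)

lemma traj_Suc: "traj PX b \<theta> (Suc t) =
   bind_pmf (J PX b \<theta>) (\<lambda>(s,x,y). map_pmf (\<lambda>rest. (s,x,y) # rest) (run PX b t (s + y - x)))"
  unfolding traj_def J_def by (simp add: bind_map_pmf bind_assoc_pmf cong: bind_pmf_cong)

lemma traj_G:
  assumes "map_pmf (\<lambda>(s,x,y). (y, s+y-x)) (J PX b \<theta>) = pair_pmf PX \<theta>"
  shows "t \<ge> 1 \<Longrightarrow> \<exists>D. map_pmf (G t) (traj PX b \<theta> t) = pair_pmf D (J PX b \<theta>)"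
proof (induction t rule: nat_induct_at_least)
  case base
  have "map_pmf (G 1) (traj PX b \<theta> 1) = map_pmf (Pair []) (J PX b \<theta>)"
    unfolding One_nat_def traj_Suc
    by (simp add: map_bind_pmf G_def Ypast_def case_prod_beta map_pmf_comp map_pmf_def bind_assoc_pmf bind_return_pmf)
  then show ?case by (metis pair_return_pmf1 One_nat_def)
next
  case (Suc t)
  then obtain D where D: "map_pmf (G t) (traj PX b \<theta> t) = pair_pmf D (J PX b \<theta>)" by blast
  define H where "H y = (\<lambda>p :: int list \<times> (int \<times> int \<times> int). (y # fst p, snd p))" for y :: int
  have "map_pmf (G (Suc t)) (traj PX b \<theta> (Suc t)) =
     bind_pmf (J PX b \<theta>) (\<lambda>(s,x,y). map_pmf (H y) (map_pmf (G t) (run PX b t (s + y - x))))"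
    unfolding traj_Suc map_bind_pmf using Suc.hyps
    by (intro bind_pmf_cong refl) (auto simp: map_pmf_comp G_Suc H_def)
  also have "\<dots> = bind_pmf (map_pmf (\<lambda>(s,x,y). (y, s+y-x)) (J PX b \<theta>))
       (\<lambda>(y, s'). map_pmf (H y) (map_pmf (G t) (run PX b t s')))"
    by (simp add: bind_map_pmf case_prod_beta split_beta')
  also have "\<dots> = bind_pmf PX (\<lambda>y. map_pmf (H y) (map_pmf (G t) (traj PX b \<theta> t)))"
    unfolding assms pair_pmf_def traj_def
    by (simp add: bind_assoc_pmf bind_return_pmf map_bind_pmf)
  also have "\<dots> = bind_pmf PX (\<lambda>y. map_pmf (H y) (pair_pmf D (J PX b \<theta>)))"
    unfolding D ..
  also have "\<dots> = pair_pmf (bind_pmf PX (\<lambda>y. map_pmf (Cons y) D)) (J PX b \<theta>)"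
    unfolding pair_pmf_def H_def
    by (simp add: bind_assoc_pmf bind_return_pmf map_bind_pmf bind_map_pmf)
  finally show ?case by blast
qed

lemma J_fst: "map_pmf fst (J PX b \<theta>) = \<theta>"
  unfolding J_def by (simp add: map_bind_pmf map_pmf_comp bind_return_pmf' bind_pmf_const)

lemma J_w: "map_pmf (\<lambda>j. fst j - fst (snd j)) (J PX b \<theta>) = Xi PX \<theta>"
proof -
  have "map_pmf (\<lambda>j. fst j - fst (snd j)) (J PX b \<theta>) =
        bind_pmf \<theta> (\<lambda>s. bind_pmf PX (\<lambda>x. return_pmf (s - x)))"
    unfolding J_def by (simp add: map_bind_pmf map_pmf_comp)
  also have "\<dots> = bind_pmf PX (\<lambda>x. bind_pmf \<theta> (\<lambda>s. return_pmf (s - x)))"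
    by (rule bind_commute_pmf)
  also have "\<dots> = Xi PX \<theta>"
    unfolding Xi_def pair_pmf_def by (simp add: map_bind_pmf bind_assoc_pmf bind_return_pmf)
  finally show ?thesis .
qed

lemma prob_prod:
  fixes D :: "'a::countable pmf" and Jd :: "'b::countable pmf"
  shows "measure_pmf.prob (pair_pmf D Jd) {p. fst p = ys \<and> P (snd p)} =
   measure_pmf.prob D {ys} * measure_pmf.prob Jd {j. P j}"
proof -
  have "{p. fst p = ys \<and> P (snd p)} = {ys} \<times> {j. P j}" by auto
  then show ?thesis by (simp add: measure_pmf_prob_product)
qed

theorem lemma8:
  fixes mx my ms :: nat and PX \<theta> :: "int pmf" and b :: "int \<Rightarrow> int pmf"
  assumes "mx \<le> my"
    and "set_pmf PX \<subseteq> {0..int mx}"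
    and "set_pmf \<theta> \<subseteq> {0..int ms}"
    and "structured_policy mx my ms PX \<theta> b"
  shows "invariant_policy PX b \<theta>"
  unfolding invariant_policy_def
proof (intro allI impI)
  fix t :: nat and ys :: "int list"
  assume t: "t \<ge> 1" and pos: "measure_pmf.prob (traj PX b \<theta> t) {tr. Ypast t tr = ys} > 0"
  obtain D where D: "map_pmf (G t) (traj PX b \<theta> t) = pair_pmf D (J PX b \<theta>)"
    using traj_G[OF J_map[OF assms] t] by blast
  have key: "measure_pmf.prob (traj PX b \<theta> t) {tr. Ypast t tr = ys \<and> P (tr ! (t - 1))} =
      measure_pmf.prob D {ys} * measure_pmf.prob (J PX b \<theta>) {j. P j}" for P
  proof -
    have "measure_pmf.prob (traj PX b \<theta> t) {tr. Ypast t tr = ys \<and> P (tr ! (t - 1))} =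
        measure_pmf.prob (map_pmf (G t) (traj PX b \<theta> t)) {p. fst p = ys \<and> P (snd p)}"
      by (simp add: G_def vimage_def)
    then show ?thesis unfolding D prob_prod .
  qed
  have den: "measure_pmf.prob (traj PX b \<theta> t) {tr. Ypast t tr = ys} = measure_pmf.prob D {ys}"
    using key[of "\<lambda>_. True"] by simp
  have Dpos: "measure_pmf.prob D {ys} > 0" using pos den by simp
  show "(\<forall>s. theta_t PX b \<theta> t ys s = pmf \<theta> s) \<and> (\<forall>w. xi_t PX b \<theta> t ys w = xi PX \<theta> w)"
  proof (intro conjI allI)
    fix s
    have "{tr. S_at t tr = s \<and> Ypast t tr = ys} = {tr. Ypast t tr = ys \<and> fst (tr ! (t - 1)) = s}"
      by (auto simp: S_at_def)
    moreover have "measure_pmf.prob (J PX b \<theta>) {j. fst j = s} = pmf \<theta> s"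
    proof -
      have "measure_pmf.prob (J PX b \<theta>) {j. fst j = s} = measure_pmf.prob (map_pmf fst (J PX b \<theta>)) {s}"
        by (simp add: vimage_def)
      then show ?thesis by (simp add: J_fst measure_pmf_single)
    qed
    ultimately show "theta_t PX b \<theta> t ys s = pmf \<theta> s"
      unfolding theta_t_def using key[of "\<lambda>j. fst j = s"] den Dpos by simp
  next
    fix w
    have "{tr. W_at t tr = w \<and> Ypast t tr = ys} =
          {tr. Ypast t tr = ys \<and> (\<lambda>j. fst j - fst (snd j) = w) (tr ! (t - 1))}"
      by (auto simp: W_at_def)
    moreover have "measure_pmf.prob (J PX b \<theta>) {j. fst j - fst (snd j) = w} = xi PX \<theta> w"
    proof -
      have "measure_pmf.prob (J PX b \<theta>) {j. fst j - fst (snd j) = w} =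
          measure_pmf.prob (map_pmf (\<lambda>j. fst j - fst (snd j)) (J PX b \<theta>)) {w}"
        by (simp add: vimage_def)
      then show ?thesis by (simp add: J_w measure_pmf_single pmf_Xi)
    qed
    ultimately show "xi_t PX b \<theta> t ys w = xi PX \<theta> w"
      unfolding xi_t_def using key[of "\<lambda>j. fst j - fst (snd j) = w"] den Dpos by simp
  qed
qed

end
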